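(* Let $n=2^i m$ with $i\geq 1$ and $m\geq 3$ odd. Suppose $f\in\mathbb{F}_{2^m}[x]$ is a 3-divisible Dembowski–Ostrom polynomial which is APN on $\mathbb{F}_{2^n}$. Then $f$ induces an APN permutation of the subfield $\mathbb{F}_{2^m}$.
   Context: A polynomial over $\mathbb{F}_{2^n}$ is Dembowski–Ostrom if it is of the form $\sum_{i\neq j}a_{ij}x^{2^i+2^j}$. It is 3-divisible if $f(x)=f'(x^3)$ for some map $f'$. A map $f$ on $\mathbb{F}_{2^N}$ is APN if for every $a\neq 0$ and every $b$ the equation $f(x+a)+f(x)=b$ has at most 2 solutions in $\mathbb{F}_{2^N}$. *)

theory Defs
  imports "HOL-Computational_Algebra.Polynomial"
begin

text \<open>The subfield F_{2^m} of a finite field of characteristic 2, as the fixed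
  points of the 2^m-th power Frobenius map.\<close>
definition subfield_pow2 :: "nat \<Rightarrow> 'a::field set" where
  "subfield_pow2 m = {x. x ^ (2 ^ m) = x}"

definition DO_poly :: "'a::field poly \<Rightarrow> bool" where
  "DO_poly f \<longleftrightarrow> (\<forall>k. coeff f k \<noteq> 0 \<longrightarrow> (\<exists>i j. i \<noteq> j \<and> k = 2 ^ i + 2 ^ j))"

definition three_divisible :: "('a::field \<Rightarrow> 'a) \<Rightarrow> bool" where
  "three_divisible g \<longleftrightarrow> (\<exists>g'. \<forall>x. g x = g' (x ^ 3))"

definition APN_on :: "'a::field set \<Rightarrow> ('a \<Rightarrow> 'a) \<Rightarrow> bool" where
  "APN_on S g \<longleftrightarrow>
     (\<forall>a\<in>S. a \<noteq> 0 \<longrightarrow> (\<forall>b\<in>S. card {x\<in>S. g (x + a) + g x = b} \<le> 2))"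

end

theory Submission
  imports Defs
begin

lemma fermat_ff:
  fixes x :: "'a::{field,finite}"
  assumes "x \<noteq> 0"
  shows "x ^ (card (UNIV :: 'a set) - 1) = 1"
proof -
  have "(\<Prod>y\<in>UNIV-{0}. x * y) = x ^ (card (UNIV :: 'a set) - 1) * \<Prod>(UNIV-{0})"
    by (simp add: prod.distrib mult_ac)
  also have "(\<Prod>y\<in>UNIV-{0}. x * y) = (\<Prod>y\<in>UNIV-{0}. y)"
    by (rule prod.reindex_bij_witness[of _ "\<lambda>y. y / x" "\<lambda>y. x * y"]) (use assms in auto)
  finally have "1 * \<Prod>(UNIV-{0::'a}) = x ^ (card (UNIV :: 'a set) - 1) * \<Prod>(UNIV-{0})" by simp
  moreover have "\<Prod>(UNIV-{0::'a}) \<noteq> 0" by simp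
  ultimately show ?thesis by (metis mult_right_cancel)
qed

lemma add_self2:
  fixes x :: "'a::field"
  assumes "(1::'a) + 1 = 0"
  shows "x + x = 0"
proof -
  have "x + x = (1 + 1) * x" by (simp add: distrib_right)
  thus ?thesis using assms by simp
qed

lemma frob_add:
  fixes x y :: "'a::field"
  assumes "(1::'a) + 1 = 0"
  shows "(x + y) ^ (2 ^ k) = x ^ (2 ^ k) + y ^ (2 ^ k)"
proof (induction k)
  case 0 then show ?case by simp
next
  case (Suc k)
  have sq: "(u + v) ^ 2 = u ^ 2 + v ^ 2" for u v :: 'a
  proof -
    have "(u + v) ^ 2 = u^2 + v^2 + (u*v + u*v)" by (simp add: power2_eq_square algebra_simps)
    thus ?thesis using add_self2[OF assms] by simp
  qed
  have "(x + y) ^ (2 ^ Suc k) = ((x + y) ^ (2 ^ k)) ^ 2" by (simp add: power_mult[symmetric] mult.commute)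
  also have "\<dots> = (x ^ (2 ^ k)) ^ 2 + (y ^ (2 ^ k)) ^ 2" using Suc sq by simp
  also have "\<dots> = x ^ (2 ^ Suc k) + y ^ (2 ^ Suc k)" by (simp add: power_mult[symmetric] mult.commute)
  finally show ?case .
qed

lemma sub_add:
  fixes x y :: "'a::field"
  assumes "(1::'a) + 1 = 0" "x \<in> subfield_pow2 m" "y \<in> subfield_pow2 m"
  shows "x + y \<in> subfield_pow2 m"
  using assms(2,3) frob_add[OF assms(1), of x y m] unfolding subfield_pow2_def by simp

lemma sub_mult:
  assumes "x \<in> subfield_pow2 m" "y \<in> subfield_pow2 m"
  shows "x * y \<in> subfield_pow2 m"
  using assms unfolding subfield_pow2_def by (simp add: power_mult_distrib)

lemma sub_div:
  assumes "x \<in> subfield_pow2 m" "y \<in> subfield_pow2 m"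
  shows "(x::'a::field) / y \<in> subfield_pow2 m"
  using assms unfolding subfield_pow2_def by (simp add: power_divide)

lemma sub_pow:
  assumes "x \<in> subfield_pow2 m"
  shows "(x::'a::field) ^ j \<in> subfield_pow2 m"
proof -
  have "(x ^ j) ^ (2 ^ m) = (x ^ (2 ^ m)) ^ j" by (simp only: power_mult[symmetric] mult.commute)
  thus ?thesis using assms unfolding subfield_pow2_def by simp
qed

lemma sub_poly:
  fixes p :: "'a::field poly"
  assumes "(1::'a) + 1 = 0" "\<forall>k. coeff p k \<in> subfield_pow2 m" "x \<in> subfield_pow2 m"
  shows "poly p x \<in> subfield_pow2 m"
  using assms(2)
proof (induction p rule: pCons_induct)
  case 0 then show ?case by (simp add: subfield_pow2_def)
next
  case (pCons a p)
  have "\<forall>k. coeff p k \<in> subfield_pow2 m" using pCons.prems by (metis coeff_pCons_Suc)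
  hence "poly p x \<in> subfield_pow2 m" using pCons.IH by simp
  moreover have "a \<in> subfield_pow2 m" using pCons.prems by (metis coeff_pCons_0)
  ultimately show ?case using sub_add[OF assms(1)] sub_mult[OF assms(3)] by simp
qed

lemma pow2_odd_mod3:
  assumes "odd (m::nat)"
  shows "\<exists>k. (2::nat) ^ m = 3 * k + 2"
proof -
  obtain j where m: "m = 2 * j + 1" using assms oddE by blast
  have "\<exists>k. (2::nat) ^ (2 * j + 1) = 3 * k + 2"
  proof (induction j)
    case 0 then show ?case by (intro exI[of _ 0]) simp
  next
    case (Suc j)
    then obtain k where k: "(2::nat) ^ (2 * j + 1) = 3 * k + 2" by blast
    have "(2::nat) ^ (2 * Suc j + 1) = 4 * 2 ^ (2 * j + 1)" by simp
    also have "\<dots> = 3 * (4 * k + 2) + 2" using k by simp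
    finally show ?case by blast
  qed
  thus ?thesis using m by simp
qed

lemma char2:
  fixes dummy :: "'a::{field,finite}"
  assumes "card (UNIV :: 'a set) = 2 ^ n" "n \<ge> 1"
  shows "(1::'a) + 1 = 0"
proof -
  have "(-1::'a) ^ (card (UNIV :: 'a set) - 1) = 1" by (rule fermat_ff) simp
  moreover have "odd (card (UNIV :: 'a set) - 1)"
  proof -
    have "even ((2::nat) ^ n)" using assms(2) by simp
    moreover have "(2::nat) ^ n > 0" by simp
    moreover have "\<And>a::nat. even a \<Longrightarrow> a > 0 \<Longrightarrow> odd (a - 1)" by presburger
    ultimately show ?thesis using assms(1) by simp
  qed
  ultimately have "(-1::'a) = 1" by simp
  hence "(1::'a) + 1 = 1 + (-1)" by simp
  thus ?thesis by simp
qed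


lemma pow4_mod3: "\<exists>k. (4::nat) ^ t = 3 * k + 1"
proof (induction t)
  case 0 then show ?case by (intro exI[of _ 0]) simp
next
  case (Suc t)
  then obtain k where k: "(4::nat) ^ t = 3 * k + 1" by blast
  have "(4::nat) ^ Suc t = 3 * (4 * k + 1) + 1" using k by simp
  thus ?case by blast
qed

lemma cube_root_unity:
  fixes dummy :: "'a::{field,finite}"
  assumes "card (UNIV::'a set) - 1 = 3 * d"
  shows "\<exists>w::'a. w ^ 3 = 1 \<and> w \<noteq> 1"
proof (rule ccontr)
  assume na: "\<not> ?thesis"
  hence w1: "\<And>w::'a. w ^ 3 = 1 \<Longrightarrow> w = 1" by blast
  have "inj (\<lambda>x::'a. x ^ 3)"
  proof (rule injI)
    fix x y :: 'a assume e: "x ^ 3 = y ^ 3"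
    show "x = y"
    proof (cases "y = 0")
      case True thus ?thesis using e by simp
    next
      case False
      have "(x / y) ^ 3 = 1" using e False by (simp add: power_divide)
      hence "x / y = 1" by (rule w1)
      thus ?thesis using False by simp
    qed
  qed
  hence su: "surj (\<lambda>x::'a. x ^ 3)" by (rule finite_UNIV_inj_surj[OF finite_UNIV])
  have c2: "card (UNIV::'a set) \<ge> 2"
  proof -
    have "{0::'a, 1} \<subseteq> UNIV" by simp
    hence "card {0::'a, 1} \<le> card (UNIV::'a set)" by (rule card_mono[OF finite_UNIV])
    thus ?thesis by simp
  qed
  hence d1: "d \<ge> 1" using assms by simp
  define p :: "'a poly" where "p = monom 1 d - 1"
  have roots: "\<And>z::'a. z \<noteq> 0 \<Longrightarrow> poly p z = 0"
  proof -
    fix z :: 'a assume z: "z \<noteq> 0"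
    obtain x where x: "z = x ^ 3" using su by (metis surjD)
    hence x0: "x \<noteq> 0" using z by auto
    have "z ^ d = x ^ (3 * d)" using x by (simp add: power_mult)
    also have "\<dots> = 1" using fermat_ff[OF x0] assms by simp
    finally show "poly p z = 0" by (simp add: p_def poly_monom)
  qed
  have pnz: "p \<noteq> 0"
  proof
    assume "p = 0"
    hence "coeff p d = 0" by simp
    thus False using d1 by (simp add: p_def coeff_monom)
  qed
  have dp: "degree p \<le> d" unfolding p_def
    by (rule degree_diff_le) (auto intro: degree_monom_le)
  have "UNIV - {0} \<subseteq> {x. poly p x = 0}" using roots by auto
  hence "card (UNIV - {0::'a}) \<le> card {x. poly p x = 0}"
    by (intro card_mono) (auto intro: poly_roots_finite[OF pnz])
  also have "\<dots> \<le> d" using card_poly_roots_bound[OF pnz] dp by simp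
  finally have "card (UNIV::'a set) - 1 \<le> d" by (simp add: card_Diff_singleton)
  thus False using assms d1 by simp
qed


theorem theorem5p1:
  fixes f :: "'a::{field,finite} poly" and n m i :: nat
  assumes "card (UNIV :: 'a set) = 2 ^ n"
    and "n = 2 ^ i * m" and "i \<ge> 1" and "m \<ge> 3" and "odd m"
    and "\<forall>k. coeff f k \<in> subfield_pow2 m"
    and "DO_poly f"
    and "three_divisible (poly f)"
    and "APN_on UNIV (poly f)"
  shows "bij_betw (poly f) (subfield_pow2 m) (subfield_pow2 m)
         \<and> APN_on (subfield_pow2 m) (poly f)"
proof -
  define S :: "'a set" where "S = subfield_pow2 m"
  have n1: "n \<ge> 1" using assms(2,4) by (simp add: Suc_le_eq)
  have c2: "(1::'a) + 1 = 0" by (rule char2[OF assms(1) n1])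
  have neg: "- y = y" for y :: 'a
  proof -
    have h: "y + y = 0" by (rule add_self2[OF c2])
    have "- y = - y + (y + y)" by (simp add: h)
    also have "\<dots> = y" by (simp add: add.assoc[symmetric])
    finally show ?thesis .
  qed
  have "even n" using assms(2,3) by simp
  then obtain t where t: "n = 2 * t" by blast
  obtain k where k: "(4::nat) ^ t = 3 * k + 1" using pow4_mod3 by blast
  have "card (UNIV::'a set) - 1 = 3 * k" using assms(1) t k by (simp add: power_mult)
  then obtain w :: 'a where w3: "w ^ 3 = 1" and w1: "w \<noteq> 1" using cube_root_unity by blast
  have w0: "w \<noteq> 0" using w3 by auto
  have "(w - 1) * (w ^ 2 + w + 1) = w ^ 3 - 1" by (simp add: algebra_simps power2_eq_square power3_eq_cube)
  hence "(w - 1) * (w ^ 2 + w + 1) = 0" using w3 by simp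
  hence "w ^ 2 + w + 1 = 0" using w1 by simp
  hence ww: "w ^ 2 = w + 1"
  proof -
    assume h: "w ^ 2 + w + 1 = 0"
    have z: "(w + 1) + (w + 1) = 0" by (rule add_self2[OF c2])
    have "w ^ 2 = w ^ 2 + ((w + 1) + (w + 1))" by (simp only: z add_0_right)
    also have "\<dots> = (w ^ 2 + w + 1) + (w + 1)" by (simp only: add.assoc)
    also have "\<dots> = w + 1" using h by simp
    finally show ?thesis .
  qed
  obtain j where j: "(2::nat) ^ m = 3 * j + 2" using pow2_odd_mod3[OF assms(5)] by blast
  have wS: "w \<notin> S"
  proof
    assume "w \<in> S"
    hence "w ^ (2 ^ m) = w" by (simp add: S_def subfield_pow2_def)
    moreover have "w ^ (2 ^ m) = w ^ 2" using j w3 by (simp add: power_add power_mult power2_eq_square)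
    ultimately have "w ^ 2 = w" by simp
    hence "w * w = 1 * w" by (simp add: power2_eq_square)
    thus False using w0 w1 by simp
  qed
  have w2S: "w ^ 2 \<notin> S"
  proof
    assume "w ^ 2 \<in> S"
    hence "(w ^ 2) ^ 2 \<in> S" unfolding S_def by (rule sub_pow)
    moreover have "(w ^ 2) ^ 2 = w ^ 3 * w" by (simp add: power2_eq_square power3_eq_cube)
    hence "(w ^ 2) ^ 2 = w" using w3 by simp
    ultimately show False using wS by simp
  qed
  have finS: "finite S" by simp
  have mapS: "poly f ` S \<subseteq> S" using sub_poly[OF c2 assms(6)] by (auto simp: S_def)
  obtain g where g: "\<And>z. poly f z = g (z ^ 3)" using assms(8) unfolding three_divisible_def by blast
  have APN: "\<And>a b. a \<noteq> 0 \<Longrightarrow> card {x. poly f (x + a) + poly f x = b} \<le> 2"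
    using assms(9) unfolding APN_on_def by auto
  have inj: "inj_on (poly f) S"
  proof (rule inj_onI, rule ccontr)
    fix x y assume xS: "x \<in> S" and yS: "y \<in> S" and e: "poly f x = poly f y" and xy: "x \<noteq> y"
    define a where "a = x + y"
    have a0: "a \<noteq> 0"
    proof
      assume h: "a = 0"
      have "x = (x + y) + y" using add_self2[OF c2, of y] by (simp add: add.assoc)
      hence "x = y" using h unfolding a_def by simp
      thus False using xy by simp
    qed
    have aS: "a \<in> S" unfolding a_def S_def using sub_add[OF c2] xS yS S_def by simp
    define F where "F u = poly f (u + a) + poly f u" for u
    have xa: "x + a = y" unfolding a_def using add_self2[OF c2, of x] by (simp add: add.assoc[symmetric])
    have F1: "F x = 0" unfolding F_def using xa e add_self2[OF c2] by simp
    have fwa: "poly f (w * a) = poly f a" using g w3 by (simp add: power_mult_distrib)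
    have "(w ^ 2 * a) ^ 3 = (w ^ 3) ^ 2 * a ^ 3"
      by (simp only: power_mult_distrib power_mult[symmetric]) simp
    hence fw2a: "poly f (w ^ 2 * a) = poly f a" using g w3 by simp
    have e1: "w * a + a = w ^ 2 * a" using ww by (simp add: algebra_simps)
    have e2: "w ^ 2 * a + a = w * a"
    proof -
      have "w ^ 2 * a + a = w * a + (a + a)" using ww by (simp add: algebra_simps)
      thus ?thesis using add_self2[OF c2, of a] by simp
    qed
    have F2: "F (w * a) = 0" unfolding F_def using e1 fwa fw2a add_self2[OF c2] by simp
    have F3: "F (w ^ 2 * a) = 0" unfolding F_def using e2 fwa fw2a add_self2[OF c2] by simp
    have d1: "w * a \<noteq> w ^ 2 * a"
    proof
      assume "w * a = w ^ 2 * a"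
      hence "w = w ^ 2" using a0 by simp
      hence "1 * w = w * w" by (simp add: power2_eq_square)
      thus False using w0 w1 by simp
    qed
    have d2: "x \<noteq> w * a"
    proof
      assume "x = w * a"
      hence "w = x / a" using a0 by simp
      hence "w \<in> S" using sub_div xS aS S_def by simp
      thus False using wS by simp
    qed
    have d3: "x \<noteq> w ^ 2 * a"
    proof
      assume "x = w ^ 2 * a"
      hence "w ^ 2 = x / a" using a0 by simp
      hence "w ^ 2 \<in> S" using sub_div xS aS S_def by simp
      thus False using w2S by simp
    qed
    have "{x, w * a, w ^ 2 * a} \<subseteq> {u. poly f (u + a) + poly f u = 0}"
      using F1 F2 F3 unfolding F_def by auto
    hence "card {x, w * a, w ^ 2 * a} \<le> card {u. poly f (u + a) + poly f u = 0}"
      by (intro card_mono) auto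
    also have "\<dots> \<le> 2" using APN[OF a0] .
    finally show False using d1 d2 d3 by simp
  qed
  have bij: "bij_betw (poly f) S S"
    unfolding bij_betw_def using inj endo_inj_surj[OF finS mapS inj] by simp
  have apnS: "APN_on S (poly f)"
    unfolding APN_on_def
  proof (intro ballI impI)
    fix a b assume "a \<in> S" "a \<noteq> 0" "b \<in> S"
    have "card {x \<in> S. poly f (x + a) + poly f x = b} \<le> card {x. poly f (x + a) + poly f x = b}"
      by (intro card_mono) auto
    also have "\<dots> \<le> 2" using APN[OF \<open>a \<noteq> 0\<close>] .
    finally show "card {x \<in> S. poly f (x + a) + poly f x = b} \<le> 2" .
  qed
  show ?thesis using bij apnS unfolding S_def by simp
qed

end
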